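(* In the standing setup, let $T$ be a valid partial table, let $T(i,b)=\emptyset$, let $c$ be a column, and suppose there are $r$ distinct $(i,b)$-addable elements in $B_{i,c}$. Then either one of these elements $x$ satisfies that $C_c+x$ is independent, or there are at least $r$ positions in column $c$ that are $(i,b)$-removable.
   Context: Standing setup: $M$ is a matroid of rank $n$ on ground set $E$; $f\le n$ is a positive integer; for each $i\in\{1,\dots,f\}$ and $j\in\{1,\dots,n\}$, $B_{i,j}$ is a basis of $M$, and the sets $B_{i,j}$ are pairwise disjoint. A valid partial table $T$ assigns to each position $(i,j)\in[f]\times[n]$ either the symbol $\emptyset$ (the position is empty) or an element $T(i,j)\in B_{i,j}$, such that for every row $i$ the set $S_i=\{T(i,j):T(i,j)\ne\emptyset\}$ is independent and for every column $j$ the set $C_j=\{T(i,j):T(i,j)\neq\emptyset\}$ is independent. Notation: for a set $A$ and an element $z$, "$A+z$ is independent" means $z\notin A$ and $A\cup\{z\}$ is independent; $A-z$ denotes $A\setminus\{z\}$ for $z\in A$; expressions such as $A-z+w$ are read left to right with the same convention. Definitions (with $T(i,b)=\emptyset$): an element $x\in B_{i,c}$ is $(i,b)$-addable if either (1) $T(i,c)=\emptyset$ and both $S_i+x$ and $C_c+x$ are independent, or (2) $T(i,c)=x'\neq\emptyset$ and there is $y\in B_{i,b}$ such that $C_b+y$ and $S_i-x'+y+x$ are independent. A position $(j,c)$ with $T(j,c)=y'\neq\emptyset$ is $(i,b)$-removable if there is an $(i,b)$-addable element $x\in B_{i,c}$ such that $C_c-y'+x$ is independent. *)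

theory Defs
  imports Main
begin

definition matroid :: "'a set \<Rightarrow> ('a set \<Rightarrow> bool) \<Rightarrow> bool" where
  "matroid E indep \<longleftrightarrow> finite E \<and> indep {} \<and>
     (\<forall>X. indep X \<longrightarrow> X \<subseteq> E) \<and>
     (\<forall>X Y. indep X \<and> Y \<subseteq> X \<longrightarrow> indep Y) \<and>
     (\<forall>X Y. indep X \<and> indep Y \<and> card X < card Y \<longrightarrow> (\<exists>z\<in>Y - X. indep (insert z X)))"

definition is_basis :: "'a set \<Rightarrow> ('a set \<Rightarrow> bool) \<Rightarrow> 'a set \<Rightarrow> bool" where
  "is_basis E indep B \<longleftrightarrow> B \<subseteq> E \<and> indep B \<and> (\<forall>X. X \<subseteq> E \<and> indep X \<and> B \<subseteq> X \<longrightarrow> X = B)"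

definition matroid_rank :: "'a set \<Rightarrow> ('a set \<Rightarrow> bool) \<Rightarrow> nat" where
  "matroid_rank E indep = Max {card X | X. X \<subseteq> E \<and> indep X}"

definition indep_plus :: "('a set \<Rightarrow> bool) \<Rightarrow> 'a set \<Rightarrow> 'a \<Rightarrow> bool" where
  "indep_plus indep A z \<longleftrightarrow> z \<notin> A \<and> indep (insert z A)"

text \<open>Tables: T i j = None is the empty symbol, Some x an entry. Rows 1..f, columns 1..n.\<close>
definition row_set :: "(nat \<Rightarrow> nat \<Rightarrow> 'a option) \<Rightarrow> nat \<Rightarrow> nat \<Rightarrow> 'a set" where
  "row_set T n i = {x. \<exists>j\<in>{1..n}. T i j = Some x}"

definition col_set :: "(nat \<Rightarrow> nat \<Rightarrow> 'a option) \<Rightarrow> nat \<Rightarrow> nat \<Rightarrow> 'a set" where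
  "col_set T f j = {x. \<exists>i\<in>{1..f}. T i j = Some x}"

definition valid_table ::
  "('a set \<Rightarrow> bool) \<Rightarrow> nat \<Rightarrow> nat \<Rightarrow> (nat \<Rightarrow> nat \<Rightarrow> 'a set) \<Rightarrow> (nat \<Rightarrow> nat \<Rightarrow> 'a option) \<Rightarrow> bool" where
  "valid_table indep f n B T \<longleftrightarrow>
     (\<forall>i\<in>{1..f}. \<forall>j\<in>{1..n}. \<forall>x. T i j = Some x \<longrightarrow> x \<in> B i j) \<and>
     (\<forall>i\<in>{1..f}. indep (row_set T n i)) \<and>
     (\<forall>j\<in>{1..n}. indep (col_set T f j))"

text \<open>x \<in> B i c is (i,b)-addable (assuming T i b is empty).\<close>
definition addable ::
  "('a set \<Rightarrow> bool) \<Rightarrow> nat \<Rightarrow> nat \<Rightarrow> (nat \<Rightarrow> nat \<Rightarrow> 'a set) \<Rightarrow> (nat \<Rightarrow> nat \<Rightarrow> 'a option)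
     \<Rightarrow> nat \<Rightarrow> nat \<Rightarrow> nat \<Rightarrow> 'a \<Rightarrow> bool" where
  "addable indep f n B T i b c x \<longleftrightarrow> x \<in> B i c \<and>
     ((T i c = None \<and> indep_plus indep (row_set T n i) x \<and> indep_plus indep (col_set T f c) x) \<or>
      (\<exists>x'. T i c = Some x' \<and>
         (\<exists>y\<in>B i b. indep_plus indep (col_set T f b) y \<and>
            indep_plus indep (row_set T n i - {x'}) y \<and>
            indep_plus indep (insert y (row_set T n i - {x'})) x)))"

definition removable ::
  "('a set \<Rightarrow> bool) \<Rightarrow> nat \<Rightarrow> nat \<Rightarrow> (nat \<Rightarrow> nat \<Rightarrow> 'a set) \<Rightarrow> (nat \<Rightarrow> nat \<Rightarrow> 'a option)
     \<Rightarrow> nat \<Rightarrow> nat \<Rightarrow> nat \<Rightarrow> nat \<Rightarrow> bool" where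
  "removable indep f n B T i b j c \<longleftrightarrow>
     (\<exists>y'. T j c = Some y' \<and>
        (\<exists>x\<in>B i c. addable indep f n B T i b c x \<and> indep_plus indep (col_set T f c - {y'}) x))"

end

theory Submission
  imports Defs
begin

lemma aug_lemma:
  assumes M: "matroid E indep"
  shows "indep A \<Longrightarrow> indep C \<Longrightarrow> A \<subseteq> S \<Longrightarrow> C \<subseteq> S \<Longrightarrow> finite S \<Longrightarrow>
     \<exists>I. indep I \<and> A \<subseteq> I \<and> I \<subseteq> S \<and> card C \<le> card I"
proof (induction "card C - card A" arbitrary: A rule: less_induct)
  case (less A)
  show ?case
  proof (cases "card C \<le> card A")
    case True then show ?thesis using less.prems by blast
  next
    case False
    then obtain z where z: "z \<in> C - A" "indep (insert z A)"
      using M less.prems unfolding matroid_def by (meson not_le)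
    have fA: "finite A" using less.prems finite_subset by blast
    have ca: "card (insert z A) = Suc (card A)" using z fA by simp
    have "card C - card (insert z A) < card C - card A" using ca False by simp
    from less.hyps[OF this z(2) less.prems(2) _ less.prems(4,5)] z less.prems(3,4)
    obtain I where "indep I \<and> insert z A \<subseteq> I \<and> I \<subseteq> S \<and> card C \<le> card I" by blast
    then show ?thesis by blast
  qed
qed

theorem mainTheorem5:
  fixes E :: "'a set" and indep :: "'a set \<Rightarrow> bool" and n f :: nat
    and B :: "nat \<Rightarrow> nat \<Rightarrow> 'a set" and T :: "nat \<Rightarrow> nat \<Rightarrow> 'a option"
    and i b c r :: nat and X :: "'a set"
  assumes M: "matroid E indep" and rk: "matroid_rank E indep = n"
    and f_pos: "0 < f" and f_le: "f \<le> n"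
    and bases: "\<forall>i\<in>{1..f}. \<forall>j\<in>{1..n}. is_basis E indep (B i j)"
    and disj: "\<forall>i\<in>{1..f}. \<forall>j\<in>{1..n}. \<forall>i'\<in>{1..f}. \<forall>j'\<in>{1..n}.
                 (i, j) \<noteq> (i', j') \<longrightarrow> B i j \<inter> B i' j' = {}"
    and valid: "valid_table indep f n B T"
    and i: "i \<in> {1..f}" and b: "b \<in> {1..n}" and c: "c \<in> {1..n}"
    and empty: "T i b = None"
    and X_sub: "X \<subseteq> B i c" and X_fin: "finite X" and X_card: "card X = r"
    and X_add: "\<forall>x\<in>X. addable indep f n B T i b c x"
  shows "(\<exists>x\<in>X. indep_plus indep (col_set T f c) x) \<or>
         r \<le> card {j \<in> {1..f}. removable indep f n B T i b j c}"
proof (subst disj_commute, rule disjCI)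
  assume neg: "\<not> (\<exists>x\<in>X. indep_plus indep (col_set T f c) x)"
  define C where "C = col_set T f c"
  define R where "R = {y \<in> C. \<exists>x\<in>X. indep_plus indep (C - {y}) x}"
  define J where "J = {j \<in> {1..f}. removable indep f n B T i b j c}"
  have Mp: "finite E" "\<And>X. indep X \<Longrightarrow> X \<subseteq> E" "\<And>X Y. indep X \<Longrightarrow> Y \<subseteq> X \<Longrightarrow> indep Y"
    "\<And>X Y. indep X \<Longrightarrow> indep Y \<Longrightarrow> card X < card Y \<Longrightarrow> (\<exists>z\<in>Y - X. indep (insert z X))"
    using M unfolding matroid_def by blast+
  have Ci: "indep C" using valid c unfolding valid_table_def C_def by blast
  have Cf: "finite C" using Mp(1) Mp(2)[OF Ci] finite_subset by blast
  have "is_basis E indep (B i c)" using bases i c by blast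
  then have "indep (B i c)" unfolding is_basis_def by blast
  then have Xi: "indep X" using X_sub Mp(3) by blast
  have Ri: "indep R" by (rule Mp(3)[OF Ci]) (auto simp: R_def)
  have Rf: "finite R" using Cf unfolding R_def by simp
  have XR: "card X \<le> card R"
  proof (rule ccontr)
    assume "\<not> card X \<le> card R"
    then obtain z where z: "z \<in> X - R" "indep (insert z R)" using Mp(4)[OF Ri Xi] by force
    have zC: "z \<notin> C"
    proof
      assume "z \<in> C"
      then have "indep_plus indep (C - {z}) z" using Ci unfolding indep_plus_def
        by (simp add: insert_absorb)
      then show False using z \<open>z \<in> C\<close> unfolding R_def by blast
    qed
    have dep: "\<not> indep (insert z C)" using neg z zC unfolding indep_plus_def C_def by blast
    obtain I where I: "indep I" "insert z R \<subseteq> I" "I \<subseteq> insert z C" "card C \<le> card I"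
      using aug_lemma[OF M z(2) Ci, of "insert z C"] Cf unfolding R_def by blast
    have "I \<noteq> insert z C" using I dep by blast
    then obtain y where y: "y \<in> C" "y \<notin> I" "y \<noteq> z" using I(2,3) by blast
    have sub: "I \<subseteq> insert z (C - {y})" using I(3) y by blast
    have "card (insert z (C - {y})) = Suc (card (C - {y}))" using Cf zC by simp
    also have "\<dots> = card C" using card_Suc_Diff1[OF Cf y(1)] .
    finally have "card (insert z (C - {y})) = card C" .
    then have "I = insert z (C - {y})" using sub I(4) Cf
      by (intro card_seteq) auto
    then have "indep_plus indep (C - {y}) z" using I(1) zC unfolding indep_plus_def by blast
    then have "y \<in> R" using y z unfolding R_def by blast
    then show False using I(2) y by blast
  qed
  have "R \<subseteq> (\<lambda>j. the (T j c)) ` J"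
  proof
    fix y assume y: "y \<in> R"
    then obtain j where j: "j \<in> {1..f}" "T j c = Some y" unfolding R_def C_def col_set_def by blast
    from y obtain x where x: "x \<in> X" "indep_plus indep (C - {y}) x" unfolding R_def by blast
    have "removable indep f n B T i b j c" unfolding removable_def
      using j x X_sub X_add C_def by blast
    then show "y \<in> (\<lambda>j. the (T j c)) ` J" using j unfolding J_def by force
  qed
  moreover have "finite J" unfolding J_def by simp
  ultimately have "card R \<le> card ((\<lambda>j. the (T j c)) ` J)"
    by (intro card_mono) auto
  also have "\<dots> \<le> card J" using \<open>finite J\<close> by (rule card_image_le)
  finally have "card R \<le> card J" .
  then show "r \<le> card {j \<in> {1..f}. removable indep f n B T i b j c}"
    using XR X_card J_def by simp
qed

end
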